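(* Let $n\ge 1$ and $m\ge 2$ be integers with $m\nmid n$, let $\ell=\lfloor n/m\rfloor$, and let $G_{n,m}=\{\theta_{m,0}+\sum_{k=1}^{\ell}a_k\theta_{m,k}: a_k\in\mathbb{F}_2\}$. Then $G_{n,m}$ is an abelian group under composition of maps, and it is isomorphic to the unit group $\left(\mathbb{F}_2[z]/(z^{\ell+1})\right)^*$.
   Context: For $x=(x_0,\dots,x_{n-1})\in\mathbb{F}_2^n$, indices of coordinates are taken modulo $n$. For a nonnegative integer $k$, the map $\theta_{m,k}\colon\mathbb{F}_2^n\to\mathbb{F}_2^n$ is defined by $\theta_{m,k}(x)=y$ with $y_i=x_{i+mk}\prod_{1\le j\le mk-1,\ m\nmid j}(x_{i+j}+1)$ for $i\in\{0,\dots,n-1\}$; $\theta_{m,0}$ is the identity map. Sums of maps are pointwise sums. *)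

theory Defs
  imports "HOL-Library.Z2" "HOL-Library.FuncSet" "HOL-Algebra.Algebra"
begin

text \<open>Vectors of F_2^n with indices taken modulo n are represented as
  n-periodic sequences nat => bit.\<close>

definition vecs :: "nat \<Rightarrow> (nat \<Rightarrow> bit) set" where
  "vecs n = {x. \<forall>i. x (i + n) = x i}"

definition theta :: "nat \<Rightarrow> nat \<Rightarrow> (nat \<Rightarrow> bit) \<Rightarrow> (nat \<Rightarrow> bit)" where
  "theta m k x = (\<lambda>i. x (i + m * k) *
      (\<Prod>j\<in>{j. 1 \<le> j \<and> j \<le> m * k - 1 \<and> \<not> m dvd j}. x (i + j) + 1))"

definition Gnm_maps :: "nat \<Rightarrow> nat \<Rightarrow> ((nat \<Rightarrow> bit) \<Rightarrow> (nat \<Rightarrow> bit)) set" where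
  "Gnm_maps n m = {f. \<exists>a :: nat \<Rightarrow> bit. f = (\<lambda>x\<in>vecs n. \<lambda>i.
      theta m 0 x i + (\<Sum>k\<in>{1..n div m}. a k * theta m k x i))}"

definition Gnm :: "nat \<Rightarrow> nat \<Rightarrow> ((nat \<Rightarrow> bit) \<Rightarrow> (nat \<Rightarrow> bit)) monoid" where
  "Gnm n m = \<lparr>carrier = Gnm_maps n m, monoid.mult = compose (vecs n),
              one = (\<lambda>x\<in>vecs n. x)\<rparr>"

definition F2 :: "int set ring" where "F2 = ZFact 2"

definition F2z :: "int set list ring" where "F2z = univ_poly F2 (carrier F2)"

definition trunc_units :: "nat \<Rightarrow> int set list set monoid" where
  "trunc_units l = units_of (F2z Quot (PIdl\<^bsub>F2z\<^esub> (X\<^bsub>F2\<^esub> [^]\<^bsub>F2z\<^esub> (l + 1))))"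

end

theory Submission
  imports Defs
begin

declare add_bit_eq_xor[simp del] mult_bit_eq_and[simp del]

definition clear :: "nat \<Rightarrow> (nat \<Rightarrow> bit) \<Rightarrow> nat \<Rightarrow> nat \<Rightarrow> bool" where
  "clear m x i t \<longleftrightarrow> (\<forall>s. 1 \<le> s \<longrightarrow> s < t \<longrightarrow> \<not> m dvd s \<longrightarrow> x (i+s) = 0)"

lemma prod_bit_plus1:
  assumes "finite S"
  shows "(\<Prod>j\<in>S. f j + (1::bit)) = (if \<forall>j\<in>S. f j = 0 then 1 else 0)"
  using assms by (induction S rule: finite_induct) auto

lemma theta_alt: "theta m k x i = (if clear m x i (m*k) then x (i+m*k) else 0)"
proof -
  have S: "{j. 1 \<le> j \<and> j \<le> m * k - 1 \<and> \<not> m dvd j} = {j. 1 \<le> j \<and> j < m*k \<and> \<not> m dvd j}" by auto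
  have fin: "finite {j. 1 \<le> j \<and> j < m*k \<and> \<not> m dvd j}" by (rule finite_subset[of _ "{..<m*k}"]) auto
  show ?thesis unfolding theta_def S prod_bit_plus1[OF fin] clear_def by auto
qed

lemma theta0: "theta m 0 x i = x i"
  by (simp add: theta_alt clear_def)

lemma clearD: "clear m x i t \<Longrightarrow> 1 \<le> s \<Longrightarrow> s < t \<Longrightarrow> \<not> m dvd s \<Longrightarrow> x (i+s) = 0"
  unfolding clear_def by blast

lemma clear_mono: "clear m x i t' \<Longrightarrow> t \<le> t' \<Longrightarrow> clear m x i t"
  unfolding clear_def by auto

lemma clear_split:
  assumes "clear m x i (m*j)"
  shows "clear m x i (m*j + m*k) \<longleftrightarrow> clear m x (i+m*j) (m*k)"
proof
  assume A: "clear m x i (m*j + m*k)"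
  show "clear m x (i+m*j) (m*k)" unfolding clear_def
  proof (intro allI impI)
    fix s assume "1 \<le> s" "s < m*k" "\<not> m dvd s"
    then have "\<not> m dvd (m*j + s)" by (simp add: dvd_add_right_iff)
    with A \<open>1 \<le> s\<close> \<open>s < m*k\<close> have "x (i + (m*j+s)) = 0" unfolding clear_def by auto
    then show "x (i + m*j + s) = 0" by (simp add: add.assoc)
  qed
next
  assume B: "clear m x (i+m*j) (m*k)"
  show "clear m x i (m*j + m*k)" unfolding clear_def
  proof (intro allI impI)
    fix s assume s: "1 \<le> s" "s < m*j + m*k" "\<not> m dvd s"
    show "x (i + s) = 0"
    proof (cases "s < m*j")
      case True then show ?thesis using assms s unfolding clear_def by auto
    next
      case False
      then obtain t where t: "s = m*j + t" by (metis le_add_diff_inverse not_less)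
      have nt: "\<not> m dvd t" using s(3) t by (simp add: dvd_add_right_iff)
      then have "t \<noteq> 0" by (metis dvd_0_right)
      with B t s nt show ?thesis unfolding clear_def by (auto simp: add.assoc)
    qed
  qed
qed

lemma ndvd_sum: "m dvd (a+b) \<Longrightarrow> \<not> m dvd a \<Longrightarrow> \<not> m dvd (b::nat)"
  by (metis dvd_add_left_iff)

lemma ndvd_sum2: "\<not> m dvd (a+b) \<Longrightarrow> m dvd a \<Longrightarrow> \<not> m dvd (b::nat)"
  by (metis dvd_add)

definition Fop :: "nat \<Rightarrow> (nat \<Rightarrow> bit) \<Rightarrow> nat \<Rightarrow> (nat \<Rightarrow> bit) \<Rightarrow> nat \<Rightarrow> bit" where
  "Fop m b N x i = (\<Sum>k\<le>N. b k * theta m k x i)"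

lemma sum_bit_ne0:
  assumes "(\<Sum>k\<in>S. f k) \<noteq> (0::bit)" shows "\<exists>k\<in>S. f k \<noteq> 0"
  using assms sum.neutral by metis

lemma Fop_one:
  assumes "Fop m b N x p = 1"
  shows "\<exists>k\<le>N. clear m x p (m*k) \<and> x (p + m*k) = 1"
proof -
  from assms have "(\<Sum>k\<le>N. b k * theta m k x p) \<noteq> 0" by (simp add: Fop_def)
  then obtain k where "k \<le> N" "b k * theta m k x p \<noteq> 0" using sum_bit_ne0 by blast
  then show ?thesis by (auto simp: theta_alt split: if_splits)
qed

lemma Fop_drop:
  assumes "b 0 = 1" "x p = 1" "Fop m b N x p = 0"
  shows "\<exists>k. 1 \<le> k \<and> k \<le> N \<and> clear m x p (m*k) \<and> x (p + m*k) = 1"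
proof -
  have "{..N} = insert 0 {1..N}" by auto
  then have "Fop m b N x p = b 0 * theta m 0 x p + (\<Sum>k\<in>{1..N}. b k * theta m k x p)"
    by (simp add: Fop_def)
  with assms theta0 have "1 + (\<Sum>k\<in>{1..N}. b k * theta m k x p) = 0" by simp
  then have "(\<Sum>k\<in>{1..N}. b k * theta m k x p) \<noteq> 0"
    by (metis add.right_neutral one_neq_zero)
  then obtain k where "k \<in> {1..N}" "b k * theta m k x p \<noteq> 0" using sum_bit_ne0 by blast
  then show ?thesis by (auto simp: theta_alt split: if_splits)
qed

lemma main_lemma:
  assumes m: "m > 0" and b0: "b 0 = 1"
  shows "theta m j (Fop m b N x) i = (\<Sum>k\<le>N. b k * theta m (j+k) x i)"
proof -
  define y where "y = Fop m b N x"
  show ?thesis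
  proof (cases "clear m x i (m*j)")
    case C: True
    have R: "(\<Sum>k\<le>N. b k * theta m (j+k) x i) = y (i + m*j)"
      unfolding y_def Fop_def
      by (rule sum.cong[OF refl]) (simp add: theta_alt clear_split[OF C] distrib_left add.assoc)
    have "y (i+m*j) = 1 \<Longrightarrow> clear m y i (m*j)"
    proof -
      assume "y (i+m*j) = 1"
      then obtain k where k: "clear m x (i+m*j) (m*k)" "x (i+m*j+m*k) = 1"
        using Fop_one unfolding y_def by blast
      define e where "e = m*j + m*k"
      have ce: "clear m x i e" unfolding e_def using clear_split[OF C] k(1) by simp
      have xe: "x (i+e) = 1" using k(2) by (simp add: e_def add.assoc)
      have me: "m dvd e" by (simp add: e_def)
      show "clear m y i (m*j)" unfolding clear_def
      proof (intro allI impI)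
        fix s assume s: "1 \<le> s" "s < m*j" "\<not> m dvd s"
        show "y (i+s) = 0"
        proof (rule ccontr)
          assume "y (i+s) \<noteq> 0"
          then have "y (i+s) = 1" by simp
          then obtain k' where k': "clear m x (i+s) (m*k')" "x (i+s+m*k') = 1"
            using Fop_one unfolding y_def by blast
          have nd: "\<not> m dvd (s + m*k')" using s(3) by (simp add: dvd_add_left_iff)
          have "e \<ge> m*j" by (simp add: e_def)
          consider "s + m*k' < e" | "s + m*k' = e" | "s + m*k' > e" by linarith
          then show False
          proof cases
            case 1
            have "1 \<le> s + m*k'" using s(1) by simp
            then have "x (i + (s+m*k')) = 0" using clearD[OF ce _ 1 nd] by simp
            then show False using k'(2) by (simp add: add.assoc)
          next
            case 2 then show False using nd me by simp
          next
            case 3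
            obtain t where t: "e = s + t" using \<open>e \<ge> m*j\<close> s(2) by (metis le_add_diff_inverse less_imp_le order.strict_trans2 not_less)
            have "\<not> m dvd t" using me s(3) t ndvd_sum by metis
            then have "t \<noteq> 0" by (metis dvd_0_right)
          then have "1 \<le> t" by simp
            moreover have "t < m*k'" using 3 t by simp
            ultimately have "x (i+s+t) = 0" by (rule clearD[OF k'(1) _ _ \<open>\<not> m dvd t\<close>])
            then show False using xe t by (simp add: add.assoc)
          qed
        qed
      qed
    qed
    then have "theta m j y i = y (i + m*j)"
      proof (cases "y (i+m*j) = 1")
        case True
        then show ?thesis using \<open>y (i+m*j) = 1 \<Longrightarrow> clear m y i (m*j)\<close> by (simp add: theta_alt)
      next
        case False
        then have "y (i+m*j) = 0" by simp
        then show ?thesis by (simp add: theta_alt)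
      qed
    with R show ?thesis by (simp add: y_def)
  next
    case NC: False
    have R: "(\<Sum>k\<le>N. b k * theta m (j+k) x i) = 0"
    proof (rule sum.neutral, intro ballI)
      fix k
      have "\<not> clear m x i (m*(j+k))" using NC clear_mono[of m x i "m*(j+k)" "m*j"] by auto
      then show "b k * theta m (j+k) x i = 0" by (simp add: theta_alt)
    qed
    have "\<not> (clear m y i (m*j) \<and> y (i+m*j) = 1)"
    proof
      assume A: "clear m y i (m*j) \<and> y (i+m*j) = 1"
      from NC obtain s where s: "1 \<le> s" "s < m*j" "\<not> m dvd s" "x (i+s) = 1"
        unfolding clear_def by auto
      define S where "S = {t. 1 \<le> t \<and> t < m*j \<and> x (i+t) = 1}"
      have finS: "finite S" unfolding S_def by (rule finite_subset[of _ "{..<m*j}"]) auto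
      have sS: "s \<in> S" using s unfolding S_def by auto
      define Q where "Q = Max S"
      have QS: "Q \<in> S" unfolding Q_def using finS sS Max_in by blast
      have Qmax: "\<And>t. t \<in> S \<Longrightarrow> t \<le> Q" unfolding Q_def using finS by simp
      have Q: "1 \<le> Q" "Q < m*j" "x (i+Q) = 1" using QS unfolding S_def mem_Collect_eq by blast+
      have Qabove: "x (i+t) = 0" if t: "Q < t" "t < m*j" for t
      proof (rule ccontr)
        assume "x (i+t) \<noteq> 0"
        then have "x (i+t) = 1" by simp
        then have "t \<in> S" using Q(1) t unfolding S_def by simp
        then show False using Qmax t(1) by fastforce
      qed
      show False
      proof (cases "m dvd Q")
        case False
        then have "y (i+Q) = 0" using clearD[OF conjunct1[OF A] Q(1) Q(2)] by simp
        then obtain k' where k': "1 \<le> k'" "clear m x (i+Q) (m*k')" "x (i+Q+m*k') = 1"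
          using Fop_drop[where b=b and x=x, OF b0 Q(3)] unfolding y_def by blast
        obtain k where k: "clear m x (i+m*j) (m*k)" "x (i+m*j+m*k) = 1"
          using Fop_one A unfolding y_def by blast
        have "m*k' \<ge> 1" using k'(1) m by (simp add: Suc_le_eq)
        have nd: "\<not> m dvd (Q + m*k')" using False by (simp add: dvd_add_left_iff)
        have gt: "Q + m*k' > m*j"
        proof -
          have "Q + m*k' \<noteq> m*j" using nd by auto
          moreover have "\<not> Q + m*k' < m*j"
          proof
            assume "Q + m*k' < m*j"
            then have "x (i + (Q+m*k')) = 0" using Qabove \<open>m*k' \<ge> 1\<close> by simp
            then show False using k'(3) by (simp add: add.assoc)
          qed
          ultimately show ?thesis by simp
        qed
        consider "m*j + m*k < Q + m*k'" | "m*j + m*k = Q + m*k'" | "m*j + m*k > Q + m*k'" by linarith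
        then show False
        proof cases
          case 1
          have "Q < m*j + m*k" using Q(2) by simp
          then obtain t where t: "m*j + m*k = Q + t" by (metis less_imp_add_positive)
          have "\<not> m dvd t" using False t ndvd_sum[of m Q t] by (metis dvd_add dvd_triv_left)
          then have "t \<noteq> 0" by (metis dvd_0_right)
          then have "1 \<le> t" by simp
          moreover have "t < m*k'" using 1 t by simp
          ultimately have "x (i+Q+t) = 0" by (rule clearD[OF k'(2) _ _ \<open>\<not> m dvd t\<close>])
          moreover have "i+Q+t = i+m*j+m*k" using t by simp
          ultimately show False using k(2) by simp
        next
          case 2 then show False using nd by (metis dvd_add dvd_triv_left)
        next
          case 3
          obtain t where t: "Q + m*k' = m*j + t" using gt by (metis less_imp_add_positive)
          have "\<not> m dvd t" using nd t ndvd_sum2[of m "m*j" t] by simp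
          then have "t \<noteq> 0" by (metis dvd_0_right)
          then have "1 \<le> t" by simp
          moreover have "t < m*k" using 3 t by simp
          ultimately have "x (i+m*j+t) = 0" by (rule clearD[OF k(1) _ _ \<open>\<not> m dvd t\<close>])
          moreover have "i+m*j+t = i+Q+m*k'" using t by simp
          ultimately show False using k'(3) by simp
        qed
      next
        case True
        define S' where "S' = {t. 1 \<le> t \<and> t < Q \<and> \<not> m dvd t \<and> x (i+t) = 1}"
        have finS': "finite S'" unfolding S'_def by (rule finite_subset[of _ "{..<Q}"]) auto
        have "s \<le> Q" using Qmax sS by blast
        moreover have "s \<noteq> Q" using True s(3) by auto
        ultimately have sS': "s \<in> S'" using s unfolding S'_def by auto
        define Q' where "Q' = Max S'"
        have QS': "Q' \<in> S'" unfolding Q'_def using finS' sS' Max_in by blast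
        have Qmax': "\<And>t. t \<in> S' \<Longrightarrow> t \<le> Q'" unfolding Q'_def using finS' by simp
        have Q': "1 \<le> Q'" "Q' < Q" "\<not> m dvd Q'" "x (i+Q') = 1" using QS' unfolding S'_def by auto
        have "Q' < m*j" using Q'(2) Q(2) by simp
        then have "y (i+Q') = 0" using clearD[OF conjunct1[OF A] Q'(1) _ Q'(3)] by simp
        then obtain k' where k': "1 \<le> k'" "clear m x (i+Q') (m*k')" "x (i+Q'+m*k') = 1"
          using Fop_drop[where b=b and x=x, OF b0 Q'(4)] unfolding y_def by blast
        have "m*k' \<ge> 1" using k'(1) m by (simp add: Suc_le_eq)
        have nd: "\<not> m dvd (Q' + m*k')" using Q'(3) by (simp add: dvd_add_left_iff)
        consider "Q' + m*k' < Q" | "Q' + m*k' = Q" | "Q' + m*k' > Q" by linarith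
        then show False
        proof cases
          case 1
          then have "Q' + m*k' \<in> S'" using nd k'(3) Q'(1) unfolding S'_def by (auto simp: add.assoc)
          then have "Q' + m*k' \<le> Q'" using Qmax' by blast
          then show False using \<open>m*k' \<ge> 1\<close> by simp
        next
          case 2 then show False using nd True by simp
        next
          case 3
          obtain t where t: "Q = Q' + t" using Q'(2) by (metis less_imp_add_positive)
          have "\<not> m dvd t" using True Q'(3) t ndvd_sum[of m Q' t] by simp
          then have "t \<noteq> 0" by (metis dvd_0_right)
          then have "1 \<le> t" by simp
          moreover have "t < m*k'" using 3 t by simp
          ultimately have "x (i+Q'+t) = 0" by (rule clearD[OF k'(2) _ _ \<open>\<not> m dvd t\<close>])
          moreover have "i+Q'+t = i+Q" using t by simp
          ultimately show False using Q(3) by simp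
        qed
      qed
    qed
    then have "theta m j y i = 0" by (auto simp: theta_alt)
    with R show ?thesis by (simp add: y_def)
  qed
qed

definition conv :: "(nat \<Rightarrow> bit) \<Rightarrow> (nat \<Rightarrow> bit) \<Rightarrow> nat \<Rightarrow> bit" where
  "conv a b t = (\<Sum>j\<le>t. a j * b (t-j))"

lemma conv_sum:
  fixes g :: "nat \<Rightarrow> bit"
  assumes "\<And>t. t > N \<Longrightarrow> g t = 0"
  shows "(\<Sum>j\<le>N. a j * (\<Sum>k\<le>N. b k * g (j+k))) = (\<Sum>t\<le>N. conv a b t * g t)"
proof -
  have "(\<Sum>j\<le>N. a j * (\<Sum>k\<le>N. b k * g (j+k))) = (\<Sum>j\<le>N. \<Sum>k\<le>N. a j * b k * g (j+k))"
    by (simp add: sum_distrib_left mult.assoc)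
  also have "\<dots> = (\<Sum>(j,k)\<in>{..N}\<times>{..N}. a j * b k * g (j+k))"
    by (simp add: sum.cartesian_product)
  also have "\<dots> = (\<Sum>(j,k)\<in>{(j,k). j+k \<le> N}. a j * b k * g (j+k))"
  proof (rule sum.mono_neutral_right)
    show "finite ({..N}\<times>{..N})" by simp
    show "{(j,k). j+k \<le> N} \<subseteq> {..N}\<times>{..N}" by auto
    show "\<forall>p\<in>{..N}\<times>{..N} - {(j,k). j+k \<le> N}. (case p of (j,k) \<Rightarrow> a j * b k * g (j+k)) = 0"
    proof (intro ballI)
      fix p assume "p \<in> {..N}\<times>{..N} - {(j,k). j+k \<le> N}"
      then obtain j k where "p = (j,k)" "\<not> j+k \<le> N" by auto
      then show "(case p of (j,k) \<Rightarrow> a j * b k * g (j+k)) = 0" using assms[of "j+k"] by simp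
    qed
  qed
  also have "\<dots> = (\<Sum>t\<le>N. \<Sum>j\<le>t. a j * b (t-j) * g (j + (t-j)))"
    by (rule sum.triangle_reindex_eq)
  also have "\<dots> = (\<Sum>t\<le>N. conv a b t * g t)"
    unfolding conv_def sum_distrib_right
    by (rule sum.cong[OF refl], rule sum.cong[OF refl]) auto
  finally show ?thesis .
qed

lemma theta_vanish:
  assumes x: "x \<in> vecs n" and m: "m > 0" and nd: "\<not> m dvd n" and k: "n div m < k"
  shows "theta m k x i = 0"
proof -
  have "n < m * (n div m + 1)"
    using m by (metis add.commute div_mult_mod_eq mod_less_divisor mult.commute distrib_left mult_1_right nat_add_left_cancel_less)
  also have "\<dots> \<le> m * k" using k by (intro mult_le_mono2) simp
  finally have lt: "n < m*k" .
  obtain s0 where s0: "n + s0 = m*k" using lt by (metis less_imp_add_positive)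
  define s where "s = s0"
  have s: "m*k = s + n" using s0 by (simp add: s_def)
  have "n \<noteq> 0" using nd by (metis dvd_0_right)
  then have s1: "1 \<le> s" "s < m*k" using s lt by auto
  have "n + s = m*k" using s by simp
  then have "m dvd n + s" by simp
  then have nds: "\<not> m dvd s" using ndvd_sum[of m n s] nd by blast
  have e1: "i + m*k = (i+s) + n" using s by simp
  have xs: "x ((i+s) + n) = x (i+s)" using x unfolding vecs_def by blast
  have per: "x (i+s) = x (i + m*k)" unfolding e1 using xs by (rule sym)
  show ?thesis
  proof (cases "clear m x i (m*k)")
    case True
    then have "x (i+s) = 0" using clearD[OF True s1(1) s1(2) nds] by simp
    then show ?thesis using per by (simp add: theta_alt)
  qed (simp add: theta_alt)
qed

lemma vecs_shift:
  assumes "x \<in> vecs n" shows "x (i + n + j) = x (i + j)"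
proof -
  have e: "i + n + j = (i+j) + n" by simp
  show ?thesis unfolding e using assms unfolding vecs_def by blast
qed

lemma theta_vecs: "x \<in> vecs n \<Longrightarrow> theta m k x (i+n) = theta m k x i"
  unfolding theta_def using vecs_shift[of x n i] by simp

lemma Fop_vecs: "x \<in> vecs n \<Longrightarrow> Fop m b N x \<in> vecs n"
  unfolding vecs_def Fop_def using theta_vecs[of x n] by (simp add: vecs_def)

lemma Fop_comp:
  assumes x: "x \<in> vecs n" and m: "m > 0" and nd: "\<not> m dvd n" and b0: "b 0 = 1"
  shows "Fop m a (n div m) (Fop m b (n div m) x) i = Fop m (conv a b) (n div m) x i"
proof -
  have "Fop m a (n div m) (Fop m b (n div m) x) i
     = (\<Sum>j\<le>n div m. a j * (\<Sum>k\<le>n div m. b k * theta m (j+k) x i))"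
    unfolding Fop_def[of m a] main_lemma[where b=b, OF m b0] ..
  also have "\<dots> = (\<Sum>t\<le>n div m. conv a b t * theta m t x i)"
    by (rule conv_sum) (rule theta_vanish[OF x m nd])
  finally show ?thesis by (simp add: Fop_def)
qed

lemma F2_dom: "domain F2"
  unfolding F2_def by (rule ZFact_prime_is_domain) simp

lemma F2_carrier: "carrier F2 = {\<zero>\<^bsub>F2\<^esub>, \<one>\<^bsub>F2\<^esub>}"
proof
  interpret F: domain F2 by (rule F2_dom)
  show "{\<zero>\<^bsub>F2\<^esub>, \<one>\<^bsub>F2\<^esub>} \<subseteq> carrier F2" by simp
  interpret I: ideal "Idl\<^bsub>\<Z>\<^esub> {2}" \<Z> by (rule int.genideal_ideal) simp
  show "carrier F2 \<subseteq> {\<zero>\<^bsub>F2\<^esub>, \<one>\<^bsub>F2\<^esub>}"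
  proof
    fix U assume "U \<in> carrier F2"
    then obtain a where a: "U = Idl\<^bsub>\<Z>\<^esub> {2} +>\<^bsub>\<Z>\<^esub> a"
      unfolding F2_def ZFact_def FactRing_def A_RCOSETS_def' by auto
    then have U: "U = ZMod 2 (a mod 2)" using ZMod_mod[of 2 a] by (simp add: ZMod_def)
    have "a mod 2 = 0 \<or> a mod 2 = 1" by auto
    then show "U \<in> {\<zero>\<^bsub>F2\<^esub>, \<one>\<^bsub>F2\<^esub>}"
    proof
      assume "a mod 2 = 0"
      then have "U = Idl\<^bsub>\<Z>\<^esub> {2} +>\<^bsub>\<Z>\<^esub> 0" using U by (simp add: ZMod_def)
      also have "\<dots> = Idl\<^bsub>\<Z>\<^esub> {2}"
      proof -
        have "(0::int) \<in> Idl\<^bsub>\<Z>\<^esub> {2}" using I.zero_closed by (simp add: int_zero_eq)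
        then show ?thesis by (rule I.a_rcos_const)
      qed
      finally show ?thesis by (simp add: F2_def ZFact_def FactRing_def)
    next
      assume "a mod 2 = 1"
      then have "U = Idl\<^bsub>\<Z>\<^esub> {2} +>\<^bsub>\<Z>\<^esub> 1" using U by (simp add: ZMod_def)
      then show ?thesis by (simp add: F2_def ZFact_def FactRing_def)
    qed
  qed
qed

interpretation F: domain F2 by (rule F2_dom)

lemma F2_zero_ne_one: "\<zero>\<^bsub>F2\<^esub> \<noteq> \<one>\<^bsub>F2\<^esub>"
  using F.one_not_zero by simp

lemma F2_one_one: "\<one>\<^bsub>F2\<^esub> \<oplus>\<^bsub>F2\<^esub> \<one>\<^bsub>F2\<^esub> = \<zero>\<^bsub>F2\<^esub>"
proof -
  have "\<one>\<^bsub>F2\<^esub> \<oplus>\<^bsub>F2\<^esub> \<one>\<^bsub>F2\<^esub> \<in> carrier F2" by simp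
  moreover have "\<one>\<^bsub>F2\<^esub> \<oplus>\<^bsub>F2\<^esub> \<one>\<^bsub>F2\<^esub> \<noteq> \<one>\<^bsub>F2\<^esub>"
  proof
    assume "\<one>\<^bsub>F2\<^esub> \<oplus>\<^bsub>F2\<^esub> \<one>\<^bsub>F2\<^esub> = \<one>\<^bsub>F2\<^esub>"
    then have "\<one>\<^bsub>F2\<^esub> = \<zero>\<^bsub>F2\<^esub>" using F.add.l_cancel_one[OF F.one_closed F.one_closed] by simp
    then show False using F2_zero_ne_one by simp
  qed
  ultimately show ?thesis using F2_carrier by auto
qed

definition tb :: "int set \<Rightarrow> bit" where
  "tb A = (if A = \<zero>\<^bsub>F2\<^esub> then 0 else 1)"

definition fb :: "bit \<Rightarrow> int set" where
  "fb b = (if b = 1 then \<one>\<^bsub>F2\<^esub> else \<zero>\<^bsub>F2\<^esub>)"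

lemma F2_cases: "A \<in> carrier F2 \<Longrightarrow> A = \<zero>\<^bsub>F2\<^esub> \<or> A = \<one>\<^bsub>F2\<^esub>"
  using F2_carrier by auto

lemma tb_zero[simp]: "tb \<zero>\<^bsub>F2\<^esub> = 0" by (simp add: tb_def)
lemma tb_one[simp]: "tb \<one>\<^bsub>F2\<^esub> = 1" using F2_zero_ne_one by (simp add: tb_def)

lemma tb_add: "A \<in> carrier F2 \<Longrightarrow> B \<in> carrier F2 \<Longrightarrow> tb (A \<oplus>\<^bsub>F2\<^esub> B) = tb A + tb B"
  using F2_cases[of A] F2_cases[of B] F2_one_one by auto

lemma tb_mult: "A \<in> carrier F2 \<Longrightarrow> B \<in> carrier F2 \<Longrightarrow> tb (A \<otimes>\<^bsub>F2\<^esub> B) = tb A * tb B"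
  using F2_cases[of A] F2_cases[of B] by auto

lemma tb_inj: "A \<in> carrier F2 \<Longrightarrow> B \<in> carrier F2 \<Longrightarrow> tb A = tb B \<Longrightarrow> A = B"
  using F2_cases[of A] F2_cases[of B] by auto

lemma fb_carrier[simp]: "fb b \<in> carrier F2" by (simp add: fb_def)
lemma tb_fb[simp]: "tb (fb b) = b" by (cases b) (auto simp: fb_def)

lemma tb_finsum:
  assumes "finite S" "f \<in> S \<rightarrow> carrier F2"
  shows "tb (finsum F2 f S) = (\<Sum>s\<in>S. tb (f s))"
  using assms
proof (induction S rule: finite_induct)
  case empty then show ?case by simp
next
  case (insert a S)
  then have fa: "f a \<in> carrier F2" and fS: "f \<in> S \<rightarrow> carrier F2" by auto
  have "finsum F2 f (insert a S) = f a \<oplus>\<^bsub>F2\<^esub> finsum F2 f S"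
    using insert fa fS by (simp add: F.finsum_insert)
  then show ?case using insert fa fS by (simp add: tb_add F.finsum_closed)
qed

lemma F2z_cring: "cring F2z"
  unfolding F2z_def by (rule F.univ_poly_is_cring[OF F.carrier_is_subring])

interpretation P: cring F2z by (rule F2z_cring)

lemma F2z_carrier: "p \<in> carrier F2z \<longleftrightarrow> polynomial\<^bsub>F2\<^esub> (carrier F2) p"
  unfolding F2z_def by (simp add: univ_poly_carrier)

lemma F2z_set: "p \<in> carrier F2z \<Longrightarrow> set p \<subseteq> carrier F2"
  using F2z_carrier F.polynomial_incl by blast

lemma F2z_mult: "p \<otimes>\<^bsub>F2z\<^esub> q = F.poly_mult p q"
  unfolding F2z_def by (simp add: univ_poly_mult)

lemma F2z_one: "\<one>\<^bsub>F2z\<^esub> = [\<one>\<^bsub>F2\<^esub>]"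
  unfolding F2z_def by (simp add: univ_poly_one)

definition cb :: "int set list \<Rightarrow> nat \<Rightarrow> bit" where
  "cb p k = tb (F.coeff p k)"

lemma cb_mult:
  assumes "p \<in> carrier F2z" "q \<in> carrier F2z"
  shows "cb (p \<otimes>\<^bsub>F2z\<^esub> q) k = conv (cb p) (cb q) k"
proof -
  have sp: "set p \<subseteq> carrier F2" and sq: "set q \<subseteq> carrier F2" using assms F2z_set by auto
  have "F.coeff (p \<otimes>\<^bsub>F2z\<^esub> q) k = (\<Oplus>\<^bsub>F2\<^esub>j\<in>{..k}. F.coeff p j \<otimes>\<^bsub>F2\<^esub> F.coeff q (k - j))"
    unfolding F2z_mult F.poly_mult_coeff[OF sp sq] ..
  then show ?thesis
    unfolding cb_def conv_def using sp sq
    by (simp add: tb_finsum tb_mult Pi_def)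
qed

lemma cb_one: "cb \<one>\<^bsub>F2z\<^esub> k = (if k = 0 then 1 else 0)"
  unfolding F2z_one cb_def by simp

lemma var_pow: "X\<^bsub>F2\<^esub> [^]\<^bsub>F2z\<^esub> (N::nat) = F.monom \<one>\<^bsub>F2\<^esub> N"
  unfolding F2z_def by (rule F.unitary_monom_eq_var_pow[OF F.carrier_is_subring, symmetric])

lemma var_pow_carrier: "X\<^bsub>F2\<^esub> [^]\<^bsub>F2z\<^esub> (N::nat) \<in> carrier F2z"
  unfolding F2z_def by (rule F.var_pow_closed[OF F.carrier_is_subring])

lemma mult_monom:
  assumes "x \<in> carrier F2z"
  shows "x \<otimes>\<^bsub>F2z\<^esub> F.monom \<one>\<^bsub>F2\<^esub> N = (if x = [] then [] else x @ replicate N \<zero>\<^bsub>F2\<^esub>)"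
proof -
  have px: "polynomial\<^bsub>F2\<^esub> (carrier F2) x" using assms F2z_carrier by blast
  have sx: "set x \<subseteq> carrier F2" using assms F2z_set by blast
  have "x \<otimes>\<^bsub>F2z\<^esub> F.monom \<one>\<^bsub>F2\<^esub> N = F.poly_mult (F.monom \<one>\<^bsub>F2\<^esub> N) x"
    unfolding F2z_mult using F.poly_mult_comm[OF sx, of "F.monom \<one>\<^bsub>F2\<^esub> N"] F.monom_in_carrier[of "\<one>\<^bsub>F2\<^esub>" N]
    by simp
  also have "\<dots> = (if x = [] then [] else F.poly_mult [\<one>\<^bsub>F2\<^esub>] x @ replicate N \<zero>\<^bsub>F2\<^esub>)"
    by (rule F.poly_mult_monom[OF px]) simp
  also have "\<dots> = (if x = [] then [] else x @ replicate N \<zero>\<^bsub>F2\<^esub>)"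
    using F.poly_mult_one(1)[OF F.carrier_is_subring px] by simp
  finally show ?thesis .
qed

definition Il :: "nat \<Rightarrow> int set list set" where
  "Il l = PIdl\<^bsub>F2z\<^esub> (X\<^bsub>F2\<^esub> [^]\<^bsub>F2z\<^esub> (l+1))"

lemma Il_ideal: "ideal (Il l) F2z"
  unfolding Il_def by (rule P.cgenideal_ideal[OF var_pow_carrier])

lemma Il_mem:
  assumes r: "r \<in> carrier F2z"
  shows "r \<in> Il l \<longleftrightarrow> (\<forall>k\<le>l. F.coeff r k = \<zero>\<^bsub>F2\<^esub>)"
proof
  assume "r \<in> Il l"
  then obtain x where x: "x \<in> carrier F2z" "r = x \<otimes>\<^bsub>F2z\<^esub> F.monom \<one>\<^bsub>F2\<^esub> (l+1)"
    unfolding Il_def cgenideal_def var_pow by auto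
  show "\<forall>k\<le>l. F.coeff r k = \<zero>\<^bsub>F2\<^esub>"
  proof (cases "x = []")
    case True then show ?thesis using x mult_monom by simp
  next
    case False
    then have "r = x @ replicate (l+1) \<zero>\<^bsub>F2\<^esub>" using x mult_monom by simp
    then show ?thesis by (simp add: F.append_coeff)
  qed
next
  assume low: "\<forall>k\<le>l. F.coeff r k = \<zero>\<^bsub>F2\<^esub>"
  define N where "N = l + 1"
  show "r \<in> Il l"
  proof (cases "r = []")
    case True
    then have "r = [] \<otimes>\<^bsub>F2z\<^esub> F.monom \<one>\<^bsub>F2\<^esub> (l+1)" using mult_monom[of "[]"] P.zero_closed
      by (simp add: F2z_def univ_poly_zero)
    moreover have "[] \<in> carrier F2z" unfolding F2z_def by (rule univ_poly_zero_closed)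
    ultimately show ?thesis unfolding Il_def cgenideal_def var_pow by auto
  next
    case False
    have pr: "polynomial\<^bsub>F2\<^esub> (carrier F2) r" using r F2z_carrier by blast
    then have hd: "hd r \<noteq> \<zero>\<^bsub>F2\<^esub>" and sr: "set r \<subseteq> carrier F2"
      using False unfolding polynomial_def by auto
    have "F.coeff r (length r - 1) = hd r" using F.lead_coeff_simp[OF False] .
    then have "\<not> length r - 1 \<le> l" using low hd by auto
    then have len: "length r > N" unfolding N_def by simp
    define L where "L = length r - N"
    define x where "x = take L r"
    have "L > 0" using len by (simp add: L_def)
    then have xne: "x \<noteq> []" using False by (simp add: x_def)
    have hdx: "hd x = hd r" using xne unfolding x_def by (metis False hd_take take_eq_Nil \<open>L>0\<close> neq0_conv)
    have "set x \<subseteq> carrier F2" using sr unfolding x_def by (meson order.trans set_take_subset)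
    then have xc: "x \<in> carrier F2z" using hdx hd xne unfolding F2z_carrier polynomial_def by auto
    have dr: "drop L r = replicate N \<zero>\<^bsub>F2\<^esub>"
    proof (rule nth_equalityI)
      show "length (drop L r) = length (replicate N \<zero>\<^bsub>F2\<^esub>)" using len by (simp add: L_def)
      fix t assume "t < length (drop L r)"
      then have t: "t < N" using len by (simp add: L_def)
      have "drop L r ! t = r ! (L + t)" using len t by (simp add: L_def)
      also have "\<dots> = F.coeff r (N - 1 - t)"
      proof -
        have "N - 1 - t < length r" using len t by simp
        then have "F.coeff r (N - 1 - t) = r ! (length r - 1 - (N - 1 - t))" by (rule F.coeff_nth)
        moreover have "length r - 1 - (N - 1 - t) = L + t" using len t by (simp add: L_def)
        ultimately show ?thesis by simp
      qed
      also have "\<dots> = \<zero>\<^bsub>F2\<^esub>" using low t by (simp add: N_def)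
      finally show "drop L r ! t = replicate N \<zero>\<^bsub>F2\<^esub> ! t" using t by simp
    qed
    have "r = x @ replicate N \<zero>\<^bsub>F2\<^esub>" unfolding x_def using dr by (metis append_take_drop_id)
    then have "r = x \<otimes>\<^bsub>F2z\<^esub> F.monom \<one>\<^bsub>F2\<^esub> (l+1)" using mult_monom[OF xc] xne by (simp add: N_def)
    then show ?thesis using xc unfolding Il_def cgenideal_def var_pow by auto
  qed
qed

lemma coeff_map_neg:
  "set q \<subseteq> carrier F2 \<Longrightarrow> F.coeff (map (\<lambda>a. \<ominus>\<^bsub>F2\<^esub> a) q) i = \<ominus>\<^bsub>F2\<^esub> F.coeff q i"
  by (induction q) auto

lemma coeff_minus:
  assumes "p \<in> carrier F2z" "q \<in> carrier F2z"
  shows "F.coeff (p \<ominus>\<^bsub>F2z\<^esub> q) k = F.coeff p k \<ominus>\<^bsub>F2\<^esub> F.coeff q k"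
proof -
  have sp: "set p \<subseteq> carrier F2" and sq: "set q \<subseteq> carrier F2" using assms F2z_set by auto
  have neg: "\<ominus>\<^bsub>F2z\<^esub> q = map (\<lambda>a. \<ominus>\<^bsub>F2\<^esub> a) q"
    using F.univ_poly_a_inv_def'[OF F.carrier_is_subring] assms(2) unfolding F2z_def by blast
  have sn: "set (map (\<lambda>a. \<ominus>\<^bsub>F2\<^esub> a) q) \<subseteq> carrier F2" using sq by auto
  have "p \<ominus>\<^bsub>F2z\<^esub> q = F.poly_add p (map (\<lambda>a. \<ominus>\<^bsub>F2\<^esub> a) q)"
    unfolding a_minus_def neg by (simp add: F2z_def univ_poly_add)
  then show ?thesis
    using F.poly_add_coeff[OF sp sn] coeff_map_neg[OF sq] by (simp add: a_minus_def)
qed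

lemma coset_eq:
  assumes p: "p \<in> carrier F2z" and q: "q \<in> carrier F2z"
  shows "Il l +>\<^bsub>F2z\<^esub> p = Il l +>\<^bsub>F2z\<^esub> q \<longleftrightarrow> (\<forall>k\<le>l. cb p k = cb q k)"
proof -
  interpret I: ideal "Il l" F2z by (rule Il_ideal)
  have "Il l +>\<^bsub>F2z\<^esub> p = Il l +>\<^bsub>F2z\<^esub> q \<longleftrightarrow> p \<ominus>\<^bsub>F2z\<^esub> q \<in> Il l"
  proof
    assume "Il l +>\<^bsub>F2z\<^esub> p = Il l +>\<^bsub>F2z\<^esub> q"
    then have "p \<in> Il l +>\<^bsub>F2z\<^esub> q" using I.a_rcos_self[OF p] by simp
    then show "p \<ominus>\<^bsub>F2z\<^esub> q \<in> Il l" using I.a_rcos_module_minus[OF P.ring_axioms q p] by simp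
  next
    assume "p \<ominus>\<^bsub>F2z\<^esub> q \<in> Il l"
    then have "p \<in> Il l +>\<^bsub>F2z\<^esub> q" using I.a_rcos_module_minus[OF P.ring_axioms q p] by simp
    then show "Il l +>\<^bsub>F2z\<^esub> p = Il l +>\<^bsub>F2z\<^esub> q" using I.a_repr_independence'[OF _ q] by simp
  qed
  also have "\<dots> \<longleftrightarrow> (\<forall>k\<le>l. F.coeff (p \<ominus>\<^bsub>F2z\<^esub> q) k = \<zero>\<^bsub>F2\<^esub>)"
    using Il_mem[of "p \<ominus>\<^bsub>F2z\<^esub> q"] p q by simp
  also have "\<dots> \<longleftrightarrow> (\<forall>k\<le>l. cb p k = cb q k)"
  proof -
    have "F.coeff (p \<ominus>\<^bsub>F2z\<^esub> q) k = \<zero>\<^bsub>F2\<^esub> \<longleftrightarrow> cb p k = cb q k" for k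
    proof -
      have cp: "F.coeff p k \<in> carrier F2" and cq: "F.coeff q k \<in> carrier F2"
        using p q F2z_set F.coeff_in_carrier by auto
      show ?thesis unfolding coeff_minus[OF p q] F.r_right_minus_eq[OF cp cq] cb_def
        using tb_inj[OF cp cq] by auto
    qed
    then show ?thesis by simp
  qed
  finally show ?thesis .
qed

abbreviation RR :: "nat \<Rightarrow> int set list set ring" where
  "RR l \<equiv> F2z Quot Il l"

lemma RR_cring: "cring (RR l)"
  by (rule ideal.quotient_is_cring[OF Il_ideal F2z_cring])

lemma RR_carrier: "U \<in> carrier (RR l) \<longleftrightarrow> (\<exists>p\<in>carrier F2z. U = Il l +>\<^bsub>F2z\<^esub> p)"
  unfolding FactRing_def A_RCOSETS_def' by auto

lemma RR_mult:
  assumes "p \<in> carrier F2z" "q \<in> carrier F2z"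
  shows "(Il l +>\<^bsub>F2z\<^esub> p) \<otimes>\<^bsub>RR l\<^esub> (Il l +>\<^bsub>F2z\<^esub> q) = Il l +>\<^bsub>F2z\<^esub> (p \<otimes>\<^bsub>F2z\<^esub> q)"
  unfolding FactRing_def using ideal.rcoset_mult_add[OF Il_ideal assms] by simp

lemma RR_one: "\<one>\<^bsub>RR l\<^esub> = Il l +>\<^bsub>F2z\<^esub> \<one>\<^bsub>F2z\<^esub>"
  unfolding FactRing_def by simp

definition rep :: "nat \<Rightarrow> int set list set \<Rightarrow> int set list" where
  "rep l U = (SOME p. p \<in> carrier F2z \<and> U = Il l +>\<^bsub>F2z\<^esub> p)"

lemma rep:
  assumes "U \<in> carrier (RR l)"
  shows "rep l U \<in> carrier F2z" "U = Il l +>\<^bsub>F2z\<^esub> rep l U"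
proof -
  have "\<exists>p. p \<in> carrier F2z \<and> U = Il l +>\<^bsub>F2z\<^esub> p" using assms RR_carrier by auto
  then have "rep l U \<in> carrier F2z \<and> U = Il l +>\<^bsub>F2z\<^esub> rep l U"
    unfolding rep_def by (rule someI_ex)
  then show "rep l U \<in> carrier F2z" "U = Il l +>\<^bsub>F2z\<^esub> rep l U" by auto
qed

definition ucoef :: "nat \<Rightarrow> int set list set \<Rightarrow> nat \<Rightarrow> bit" where
  "ucoef l U k = cb (rep l U) k"

lemma ucoef_coset:
  assumes "p \<in> carrier F2z" "k \<le> l"
  shows "ucoef l (Il l +>\<^bsub>F2z\<^esub> p) k = cb p k"
proof -
  have U: "Il l +>\<^bsub>F2z\<^esub> p \<in> carrier (RR l)" using assms RR_carrier by auto
  have "Il l +>\<^bsub>F2z\<^esub> rep l (Il l +>\<^bsub>F2z\<^esub> p) = Il l +>\<^bsub>F2z\<^esub> p" using rep(2)[OF U] by simp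
  then show ?thesis using coset_eq[OF rep(1)[OF U] assms(1)] assms(2) unfolding ucoef_def by blast
qed

lemma ucoef_mult:
  assumes U: "U \<in> carrier (RR l)" and V: "V \<in> carrier (RR l)" and k: "k \<le> l"
  shows "ucoef l (U \<otimes>\<^bsub>RR l\<^esub> V) k = conv (ucoef l U) (ucoef l V) k"
proof -
  have "U \<otimes>\<^bsub>RR l\<^esub> V = (Il l +>\<^bsub>F2z\<^esub> rep l U) \<otimes>\<^bsub>RR l\<^esub> (Il l +>\<^bsub>F2z\<^esub> rep l V)"
    using rep(2)[OF U] rep(2)[OF V] by (rule arg_cong2[where f="(\<otimes>\<^bsub>RR l\<^esub>)"])
  also have "\<dots> = Il l +>\<^bsub>F2z\<^esub> (rep l U \<otimes>\<^bsub>F2z\<^esub> rep l V)"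
    by (rule RR_mult[OF rep(1)[OF U] rep(1)[OF V]])
  finally have "U \<otimes>\<^bsub>RR l\<^esub> V = Il l +>\<^bsub>F2z\<^esub> (rep l U \<otimes>\<^bsub>F2z\<^esub> rep l V)" .
  then show ?thesis
    using ucoef_coset[OF P.m_closed[OF rep(1)[OF U] rep(1)[OF V]] k] cb_mult[OF rep(1)[OF U] rep(1)[OF V]]
    unfolding ucoef_def by simp
qed

lemma conv0: "conv a b 0 = a 0 * b 0"
  by (simp add: conv_def)

lemma unit_coef0:
  assumes "U \<in> Units (RR l)"
  shows "ucoef l U 0 = 1"
proof -
  from assms obtain V where U: "U \<in> carrier (RR l)" and V: "V \<in> carrier (RR l)"
    and UV: "U \<otimes>\<^bsub>RR l\<^esub> V = \<one>\<^bsub>RR l\<^esub>"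
    unfolding Units_def by auto
  have "ucoef l (U \<otimes>\<^bsub>RR l\<^esub> V) 0 = 1"
    unfolding UV RR_one using ucoef_coset[OF P.one_closed, of 0 l] cb_one by simp
  then have "ucoef l U 0 * ucoef l V 0 = 1" using ucoef_mult[OF U V, of 0] conv0 by simp
  then show ?thesis by (cases "ucoef l U 0") auto
qed

lemma coeff_revmap: "F.coeff (rev (map f [0..<N])) k = (if k < N then f k else \<zero>\<^bsub>F2\<^esub>)"
  by (induction N) auto

definition poly_of :: "nat \<Rightarrow> (nat \<Rightarrow> bit) \<Rightarrow> int set list" where
  "poly_of l a = F.normalize (rev (map (\<lambda>k. fb (a k)) [0..<l+1]))"

lemma poly_of_carrier: "poly_of l a \<in> carrier F2z"
  unfolding poly_of_def F2z_carrier by (rule F.normalize_gives_polynomial) auto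

lemma cb_poly_of: "k \<le> l \<Longrightarrow> cb (poly_of l a) k = a k"
  unfolding poly_of_def cb_def F.normalize_coeff[symmetric] coeff_revmap by simp

lemma conv_cong: "(\<And>j. j \<le> t \<Longrightarrow> a j = a' j) \<Longrightarrow> (\<And>j. j \<le> t \<Longrightarrow> b j = b' j) \<Longrightarrow> conv a b t = conv a' b' t"
  unfolding conv_def by (rule sum.cong) auto

lemma inv_exists:
  assumes a0: "a 0 = 1"
  shows "\<exists>b. b 0 = 1 \<and> (\<forall>t. 1 \<le> t \<and> t \<le> N \<longrightarrow> conv a b t = 0)"
proof (induction N)
  case 0 then show ?case by (intro exI[of _ "\<lambda>_. 1"]) auto
next
  case (Suc N)
  then obtain b where b0: "b 0 = 1" and bN: "\<forall>t. 1 \<le> t \<and> t \<le> N \<longrightarrow> conv a b t = 0" by blast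
  define c where "c = conv a b (Suc N)"
  define b' where "b' = b(Suc N := b (Suc N) + c)"
  have "b' 0 = 1" using b0 by (simp add: b'_def)
  moreover have "conv a b' t = 0" if t: "1 \<le> t" "t \<le> Suc N" for t
  proof (cases "t \<le> N")
    case True
    have "conv a b' t = conv a b t" by (rule conv_cong) (use True in \<open>auto simp: b'_def\<close>)
    then show ?thesis using bN t True by simp
  next
    case False
    then have tt: "t = Suc N" using t by simp
    have "conv a b' t = (\<Sum>j\<le>t. a j * b (t-j) + (if j = 0 then a j * c else 0))"
      unfolding conv_def b'_def tt by (rule sum.cong) (auto simp: distrib_left)
    also have "\<dots> = conv a b t + a 0 * c"
      by (simp add: sum.distrib conv_def)
    also have "\<dots> = c + c" using a0 tt by (simp add: c_def)
    also have "\<dots> = 0" by simp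
    finally show ?thesis .
  qed
  ultimately show ?case by blast
qed

lemma unit_exists:
  assumes a0: "a 0 = 1"
  shows "\<exists>U\<in>Units (RR l). \<forall>k\<le>l. ucoef l U k = a k"
proof -
  obtain b where b0: "b 0 = 1" and bi: "\<forall>t. 1 \<le> t \<and> t \<le> l \<longrightarrow> conv a b t = 0"
    using inv_exists[where a=a and N=l, OF a0] by blast
  define p where "p = poly_of l a"
  define q where "q = poly_of l b"
  have pc: "p \<in> carrier F2z" and qc: "q \<in> carrier F2z" unfolding p_def q_def by (auto simp: poly_of_carrier)
  define U where "U = Il l +>\<^bsub>F2z\<^esub> p"
  define V where "V = Il l +>\<^bsub>F2z\<^esub> q"
  have Uc: "U \<in> carrier (RR l)" and Vc: "V \<in> carrier (RR l)"
    unfolding U_def V_def using pc qc RR_carrier by auto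
  have "Il l +>\<^bsub>F2z\<^esub> (p \<otimes>\<^bsub>F2z\<^esub> q) = Il l +>\<^bsub>F2z\<^esub> \<one>\<^bsub>F2z\<^esub>"
  proof (subst coset_eq[OF P.m_closed[OF pc qc] P.one_closed], intro allI impI)
    fix k assume k: "k \<le> l"
    have "cb (p \<otimes>\<^bsub>F2z\<^esub> q) k = conv (cb p) (cb q) k" by (rule cb_mult[OF pc qc])
    also have "\<dots> = conv a b k"
      by (rule conv_cong) (use k in \<open>auto simp: p_def q_def cb_poly_of\<close>)
    also have "\<dots> = cb \<one>\<^bsub>F2z\<^esub> k"
      using bi k a0 b0 by (cases "k = 0") (auto simp: cb_one conv0)
    finally show "cb (p \<otimes>\<^bsub>F2z\<^esub> q) k = cb \<one>\<^bsub>F2z\<^esub> k" .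
  qed
  then have UV: "U \<otimes>\<^bsub>RR l\<^esub> V = \<one>\<^bsub>RR l\<^esub>"
    unfolding U_def V_def RR_mult[OF pc qc] RR_one .
  have VU: "V \<otimes>\<^bsub>RR l\<^esub> U = \<one>\<^bsub>RR l\<^esub>"
  proof -
    interpret Q: cring "RR l" by (rule RR_cring)
    show ?thesis using UV Q.m_comm[OF Uc Vc] by simp
  qed
  have "U \<in> Units (RR l)" using Uc Vc UV VU unfolding Units_def by auto
  moreover have "\<forall>k\<le>l. ucoef l U k = a k"
    using ucoef_coset[OF pc] cb_poly_of unfolding U_def p_def by simp
  ultimately show ?thesis by blast
qed

lemma Fop_split: "a 0 = 1 \<Longrightarrow> Fop m a N x i = theta m 0 x i + (\<Sum>k\<in>{1..N}. a k * theta m k x i)"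
proof -
  assume a0: "a 0 = 1"
  have "{..N} = insert 0 {1..N}" by auto
  then show ?thesis using a0 by (simp add: Fop_def)
qed

lemma Fop_cong: "(\<And>k. k \<le> N \<Longrightarrow> a k = a' k) \<Longrightarrow> Fop m a N x = Fop m a' N x"
  unfolding Fop_def by (intro ext sum.cong) auto

lemma Gnm_carrier:
  "carrier (Gnm n m) = {(\<lambda>x\<in>vecs n. Fop m a (n div m) x) | a. a 0 = 1}"
proof -
  have "(\<lambda>x\<in>vecs n. \<lambda>i. theta m 0 x i + (\<Sum>k\<in>{1..n div m}. a k * theta m k x i))
        = (\<lambda>x\<in>vecs n. Fop m (a(0:=1)) (n div m) x)" for a
  proof -
    have "(\<Sum>k\<in>{1..n div m}. a k * theta m k x i) = (\<Sum>k\<in>{1..n div m}. (a(0:=1)) k * theta m k x i)" for x i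
      by (rule sum.cong) auto
    then show ?thesis using Fop_split[of "a(0:=1)" m] by (auto simp: fun_eq_iff)
  qed
  moreover have "(\<lambda>x\<in>vecs n. Fop m a (n div m) x)
        = (\<lambda>x\<in>vecs n. \<lambda>i. theta m 0 x i + (\<Sum>k\<in>{1..n div m}. a k * theta m k x i))" if "a 0 = 1" for a
    using Fop_split[of a m, OF that] by (auto simp: fun_eq_iff)
  note H = calculation this
  have C: "carrier (Gnm n m) = {f. \<exists>a. f = (\<lambda>x\<in>vecs n. \<lambda>i. theta m 0 x i + (\<Sum>k\<in>{1..n div m}. a k * theta m k x i))}"
    unfolding Gnm_def Gnm_maps_def by simp
  show ?thesis unfolding C
  proof (intro equalityI subsetI)
    fix f assume "f \<in> {f. \<exists>a. f = (\<lambda>x\<in>vecs n. \<lambda>i. theta m 0 x i + (\<Sum>k\<in>{1..n div m}. a k * theta m k x i))}"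
    then obtain a where "f = (\<lambda>x\<in>vecs n. \<lambda>i. theta m 0 x i + (\<Sum>k\<in>{1..n div m}. a k * theta m k x i))" by blast
    then have "f = (\<lambda>x\<in>vecs n. Fop m (a(0:=1)) (n div m) x)" using H(1) by simp
    moreover have "(a(0:=1)) 0 = 1" by simp
    ultimately show "f \<in> {(\<lambda>x\<in>vecs n. Fop m a (n div m) x) | a. a 0 = 1}" by blast
  next
    fix f assume "f \<in> {(\<lambda>x\<in>vecs n. Fop m a (n div m) x) | a. a 0 = 1}"
    then obtain a where "f = (\<lambda>x\<in>vecs n. Fop m a (n div m) x)" "a 0 = 1" by blast
    then have "f = (\<lambda>x\<in>vecs n. \<lambda>i. theta m 0 x i + (\<Sum>k\<in>{1..n div m}. a k * theta m k x i))" using H(2) by simp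
    then show "f \<in> {f. \<exists>a. f = (\<lambda>x\<in>vecs n. \<lambda>i. theta m 0 x i + (\<Sum>k\<in>{1..n div m}. a k * theta m k x i))}" by blast
  qed
qed

lemma Fop_test:
  assumes m: "m > 0" and nd: "\<not> m dvd n" and k0: "1 \<le> k0" "k0 \<le> n div m"
  defines "x \<equiv> (\<lambda>p. if p mod n = m*k0 then 1 else (0::bit))"
  shows "x \<in> vecs n" "Fop m a (n div m) x 0 = a k0"
proof -
  show "x \<in> vecs n" unfolding vecs_def x_def by simp
  have le: "m * k \<le> n" if "k \<le> n div m" for k
    using that m by (metis div_times_less_eq_dividend dual_order.trans mult.commute mult_le_mono2)
  have lt: "m * k < n" if "k \<le> n div m" for k
  proof -
    have "m * k \<noteq> n" using nd by auto
    then show ?thesis using le[OF that] by simp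
  qed
  have xk: "x (m*k) = (if k = k0 then 1 else 0)" if "k \<le> n div m" for k
    using lt[OF that] m unfolding x_def by auto
  have cl: "clear m x 0 (m*k0)"
    unfolding clear_def x_def using lt[OF k0(2)] by auto
  have th: "theta m k x 0 = (if k = k0 then 1 else 0)" if "k \<le> n div m" for k
    using xk[OF that] cl by (auto simp: theta_alt)
  have "Fop m a (n div m) x 0 = (\<Sum>k\<le>n div m. if k = k0 then a k else 0)"
    unfolding Fop_def by (rule sum.cong) (auto simp: th)
  also have "\<dots> = a k0" using k0 by simp
  finally show "Fop m a (n div m) x 0 = a k0" .
qed

lemma Fop_inj:
  assumes m: "m > 0" and nd: "\<not> m dvd n" and a0: "a 0 = a' 0"
    and eq: "\<And>x. x \<in> vecs n \<Longrightarrow> Fop m a (n div m) x = Fop m a' (n div m) x"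
    and k: "k \<le> n div m"
  shows "a k = a' k"
proof (cases "k = 0")
  case True then show ?thesis using a0 by simp
next
  case False
  then have k1: "1 \<le> k" by simp
  define x where "x = (\<lambda>p. if p mod n = m*k then 1 else (0::bit))"
  have "x \<in> vecs n" using Fop_test(1)[OF m nd k1 k] unfolding x_def .
  then have "Fop m a (n div m) x 0 = Fop m a' (n div m) x 0" using eq by simp
  then show ?thesis using Fop_test(2)[OF m nd k1 k, of a] Fop_test(2)[OF m nd k1 k, of a'] unfolding x_def by simp
qed

lemma trunc_units_eq: "trunc_units l = units_of (RR l)"
  unfolding trunc_units_def Il_def ..

definition psi :: "nat \<Rightarrow> nat \<Rightarrow> int set list set \<Rightarrow> ((nat \<Rightarrow> bit) \<Rightarrow> (nat \<Rightarrow> bit))" where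
  "psi n m U = (\<lambda>x\<in>vecs n. Fop m (ucoef (n div m) U) (n div m) x)"

theorem theorem2:
  fixes n m :: nat
  assumes "n \<ge> 1" and "m \<ge> 2" and "\<not> m dvd n"
  shows "comm_group (Gnm n m) \<and> Gnm n m \<cong> trunc_units (n div m)"
proof -
  define l where "l = n div m"
  have m: "m > 0" using assms(2) by simp
  note nd = assms(3)
  interpret Q: cring "RR l" by (rule RR_cring)
  define H where "H = units_of (RR l)"
  define G where "G = Gnm n m"
  have Hcg: "comm_group H" unfolding H_def by (rule Q.units_comm_group)
  then interpret HG: comm_group H .
  have carrH: "carrier H = Units (RR l)" unfolding H_def by (simp add: units_of_carrier)
  have multH: "\<And>U V. U \<otimes>\<^bsub>H\<^esub> V = U \<otimes>\<^bsub>RR l\<^esub> V" unfolding H_def by (simp add: units_of_mult)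
  have carrG: "carrier G = {(\<lambda>x\<in>vecs n. Fop m a l x) | a. a 0 = 1}"
    unfolding G_def l_def by (rule Gnm_carrier)
  have multG: "\<And>f g. f \<otimes>\<^bsub>G\<^esub> g = compose (vecs n) f g" unfolding G_def Gnm_def by simp
  have oneG: "\<one>\<^bsub>G\<^esub> = (\<lambda>x\<in>vecs n. x)" unfolding G_def Gnm_def by simp
  define h where "h = psi n m"
  have h_def': "h U = (\<lambda>x\<in>vecs n. Fop m (ucoef l U) l x)" for U
    unfolding h_def psi_def l_def ..
  have unitc: "U \<in> carrier (RR l)" if "U \<in> Units (RR l)" for U using that unfolding Units_def by auto
  have h_in: "h U \<in> carrier G" if "U \<in> Units (RR l)" for U
    unfolding carrG h_def' using unit_coef0[OF that] by blast
  have h_mult: "h (U \<otimes>\<^bsub>RR l\<^esub> V) = compose (vecs n) (h U) (h V)"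
    if U: "U \<in> Units (RR l)" and V: "V \<in> Units (RR l)" for U V
  proof (rule ext)
    fix x
    show "h (U \<otimes>\<^bsub>RR l\<^esub> V) x = compose (vecs n) (h U) (h V) x"
    proof (cases "x \<in> vecs n")
      case True
      have "Fop m (ucoef l (U \<otimes>\<^bsub>RR l\<^esub> V)) l x = Fop m (conv (ucoef l U) (ucoef l V)) l x"
        by (rule Fop_cong) (rule ucoef_mult[OF unitc[OF U] unitc[OF V]])
      also have "\<dots> = Fop m (ucoef l U) l (Fop m (ucoef l V) l x)"
        unfolding l_def by (rule ext, rule Fop_comp[where b="ucoef l V" and a="ucoef l U", OF True m nd unit_coef0[OF V], symmetric, unfolded l_def])
      finally show ?thesis using True Fop_vecs[OF True] unfolding h_def' compose_def by simp
    next
      case False then show ?thesis unfolding h_def' compose_def by simp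
    qed
  qed
  have h_inj: "inj_on h (Units (RR l))"
  proof (rule inj_onI)
    fix U V assume U: "U \<in> Units (RR l)" and V: "V \<in> Units (RR l)" and e: "h U = h V"
    have "\<And>x. x \<in> vecs n \<Longrightarrow> Fop m (ucoef l U) (n div m) x = Fop m (ucoef l V) (n div m) x"
    proof -
      fix x assume "x \<in> vecs n"
      then show "Fop m (ucoef l U) (n div m) x = Fop m (ucoef l V) (n div m) x"
        using fun_cong[OF e, of x] unfolding h_def' l_def by simp
    qed
    then have "\<forall>k\<le>l. ucoef l U k = ucoef l V k"
      using Fop_inj[OF m nd] unit_coef0[OF U] unit_coef0[OF V] unfolding l_def by metis
    then have "Il l +>\<^bsub>F2z\<^esub> rep l U = Il l +>\<^bsub>F2z\<^esub> rep l V"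
      using coset_eq[OF rep(1)[OF unitc[OF U]] rep(1)[OF unitc[OF V]]] unfolding ucoef_def by simp
    then show "U = V" using rep(2)[OF unitc[OF U]] rep(2)[OF unitc[OF V]] by simp
  qed
  have h_surj: "h ` Units (RR l) = carrier G"
  proof
    show "h ` Units (RR l) \<subseteq> carrier G" using h_in by auto
    show "carrier G \<subseteq> h ` Units (RR l)"
    proof
      fix f assume "f \<in> carrier G"
      then obtain a where f: "f = (\<lambda>x\<in>vecs n. Fop m a l x)" and a0: "a 0 = 1" unfolding carrG by auto
      obtain U where U: "U \<in> Units (RR l)" and cU: "\<forall>k\<le>l. ucoef l U k = a k"
        using unit_exists[where a=a and l=l, OF a0] by blast
      have "Fop m (ucoef l U) l = Fop m a l" using Fop_cong[of l "ucoef l U" a] cU by blast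
      then have "h U = f" unfolding h_def' f by simp
      then show "f \<in> h ` Units (RR l)" using U by blast
    qed
  qed
  have h_iso: "h \<in> iso H G"
    unfolding iso_def hom_def carrH bij_betw_def
    using h_in h_mult h_inj h_surj Q.Units_m_closed by (auto simp: multH multG)
  have GmapsPi: "f \<in> vecs n \<rightarrow> vecs n" "f \<in> extensional (vecs n)" if "f \<in> carrier G" for f
    using that unfolding carrG by (auto simp: Fop_vecs)
  have one_in: "(\<lambda>x\<in>vecs n. x) \<in> carrier G"
  proof -
    have "(\<lambda>x\<in>vecs n. x) = (\<lambda>x\<in>vecs n. Fop m (\<lambda>k. if k = 0 then 1 else 0) l x)"
    proof -
      have "Fop m (\<lambda>k. if k = 0 then 1 else 0) l x = x" for x
      proof (rule ext)
        fix i
        have "Fop m (\<lambda>k. if k = 0 then 1 else 0) l x i = (\<Sum>k\<le>l. if k = 0 then theta m k x i else 0)"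
          unfolding Fop_def by (rule sum.cong) auto
        also have "\<dots> = x i" by (simp add: theta0)
        finally show "Fop m (\<lambda>k. if k = 0 then 1 else 0) l x i = x i" .
      qed
      then show ?thesis by simp
    qed
    then show ?thesis unfolding carrG by auto
  qed
  have Gmon: "monoid G"
  proof (rule monoidI)
    show "x \<otimes>\<^bsub>G\<^esub> y \<in> carrier G" if "x \<in> carrier G" "y \<in> carrier G" for x y
    proof -
      have "x \<in> h ` Units (RR l)" using that(1) h_surj by simp
      then obtain U where U: "U \<in> Units (RR l)" "x = h U" by (rule imageE) simp
      have "y \<in> h ` Units (RR l)" using that(2) h_surj by simp
      then obtain V where V: "V \<in> Units (RR l)" "y = h V" by (rule imageE) simp
      have "x \<otimes>\<^bsub>G\<^esub> y = h (U \<otimes>\<^bsub>RR l\<^esub> V)"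
        unfolding multG U(2) V(2) by (rule h_mult[OF U(1) V(1), symmetric])
      then show ?thesis using h_in[OF Q.Units_m_closed[OF U(1) V(1)]] by simp
    qed
    show "\<one>\<^bsub>G\<^esub> \<in> carrier G" using one_in oneG by simp
    show "x \<otimes>\<^bsub>G\<^esub> y \<otimes>\<^bsub>G\<^esub> z = x \<otimes>\<^bsub>G\<^esub> (y \<otimes>\<^bsub>G\<^esub> z)"
      if "x \<in> carrier G" "y \<in> carrier G" "z \<in> carrier G" for x y z
      unfolding multG using compose_assoc[OF GmapsPi(1)[OF that(3)], of x y] GmapsPi(1)[OF that(2)] by simp
    show "\<one>\<^bsub>G\<^esub> \<otimes>\<^bsub>G\<^esub> x = x" if "x \<in> carrier G" for x
      unfolding multG oneG using Id_compose GmapsPi[OF that] by blast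
    show "x \<otimes>\<^bsub>G\<^esub> \<one>\<^bsub>G\<^esub> = x" if "x \<in> carrier G" for x
      unfolding multG oneG using compose_Id GmapsPi[OF that] by blast
  qed
  have HG: "H \<cong> G" using h_iso by (rule is_isoI)
  have "comm_group G" by (rule HG.iso_imp_comm_group[OF HG Gmon])
  moreover have "G \<cong> H" by (rule HG.iso_sym[OF HG])
  ultimately show ?thesis unfolding G_def H_def l_def trunc_units_eq by simp
qed

end
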